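(* Let $l^{(u)}\in L_u$ for each $u\in U^I_{\min}$. Then $\sum_{u\in U^I_{\min}}l^{(u)}={\bf 0}$ if and only if $l^{(u)}={\bf 0}$ for all $u\in U^I_{\min}$.
   Context: $n\ge1$, $d\ge2$, $I\subseteq\{0,\dots,n\}$; ${\bf a}_1,\dots,{\bf a}_N\in\mathbb{N}^{n+1}$ with coordinate sums $d$, ${\bf a}_j^+=({\bf a}_j,1)\in\mathbb{N}^{n+2}$. $\mu_I$: $\lceil|I|/d\rceil=\mu_I+1$. $U^I_{\min}$: the set of $u\in\mathbb{N}^{n+2}$ with $\sum_{i=0}^nu_i=du_{n+1}$, $u_i>0$ for $i\in I$, and $u_{n+1}=\mu_I+1$. Hypothesis: $N\ge\mu_I+|U^I_{\min}|$ and for each $u\in U^I_{\min}$ there is $k_u$, $1\le k_u\le|U^I_{\min}|$, with $u={\bf a}^+_{\mu_I+k_u}+\sum_{j=1}^{\mu_I}{\bf a}_j^+$. For $u\in U^I_{\min}$, $L_u$ is the set of $l\in\mathbb{Z}^N$ with $\sum_{k=1}^Nl_k{\bf a}_k^+={\bf 0}$, $l_j\le0$ for $j=1,\dots,\mu_I$ and for $j=\mu_I+k_u$, and $l_j\ge0$ for all other $j$. *)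

theory Defs
  imports Complex_Main
begin

text \<open>Vectors in N^(m) / Z^(m) are modelled as functions on nat that vanish outside
  the index range. a j is the vector a_j (j = 1..N, coordinates 0..n).\<close>

definition muI :: "nat \<Rightarrow> nat set \<Rightarrow> int" where
  "muI d I = \<lceil>real (card I) / real d\<rceil> - 1"

definition aplus :: "nat \<Rightarrow> (nat \<Rightarrow> nat \<Rightarrow> nat) \<Rightarrow> nat \<Rightarrow> nat \<Rightarrow> nat" where
  "aplus n a j i = (if i \<le> n then a j i else if i = n + 1 then 1 else 0)"

definition Umin :: "nat \<Rightarrow> nat \<Rightarrow> nat set \<Rightarrow> (nat \<Rightarrow> nat) set" where
  "Umin n d I = {u. (\<forall>i. n + 1 < i \<longrightarrow> u i = 0)
      \<and> (\<Sum>i\<le>n. u i) = d * u (n + 1)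
      \<and> (\<forall>i\<in>I. 0 < u i)
      \<and> int (u (n + 1)) = muI d I + 1}"

definition Lset :: "nat \<Rightarrow> nat \<Rightarrow> (nat \<Rightarrow> nat \<Rightarrow> nat) \<Rightarrow> int \<Rightarrow> nat \<Rightarrow> (nat \<Rightarrow> int) set" where
  "Lset n N a mu ku = {l. (\<forall>j. j \<notin> {1..N} \<longrightarrow> l j = 0)
      \<and> (\<forall>i\<le>n + 1. (\<Sum>j=1..N. l j * int (aplus n a j i)) = 0)
      \<and> (\<forall>j\<in>{1..N}. if int j \<le> mu \<or> int j = mu + int ku then l j \<le> 0 else 0 \<le> l j)}"

end

theory Submission imports Defs "HOL-Library.FuncSet" begin

lemma key_expand:
  fixes M :: "'a \<Rightarrow> int" and f :: "'a \<Rightarrow> nat \<Rightarrow> int"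
  assumes "finite U" "finite K" "(\<Sum>v\<in>U. M v) = 0" "\<forall>i\<in>K. (\<Sum>v\<in>U. M v * f v i) = 0"
  shows "(\<Sum>v\<in>U. M v * (\<Sum>i\<in>K. (f v i - c i)^2)) = (\<Sum>v\<in>U. M v * (\<Sum>i\<in>K. (f v i)^2))"
proof -
  have e: "M v * (\<Sum>i\<in>K. (f v i - c i)^2) = M v * (\<Sum>i\<in>K. (f v i)^2)
      - 2 * (\<Sum>i\<in>K. c i * (M v * f v i)) + (\<Sum>i\<in>K. (c i)^2) * M v" for v
  proof -
    have "(\<Sum>i\<in>K. (f v i - c i)^2) = (\<Sum>i\<in>K. (f v i)^2 - 2 * (c i * f v i) + (c i)^2)"
      by (rule sum.cong) (simp_all add: power2_diff)
    also have "\<dots> = (\<Sum>i\<in>K. (f v i)^2) - 2 * (\<Sum>i\<in>K. c i * f v i) + (\<Sum>i\<in>K. (c i)^2)"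
      by (simp add: sum.distrib sum_subtractf sum_distrib_left)
    finally show ?thesis by (simp add: sum_distrib_left sum_distrib_right ring_distribs mult.left_commute mult.commute)
  qed
  have "(\<Sum>v\<in>U. M v * (\<Sum>i\<in>K. (f v i - c i)^2)) = (\<Sum>v\<in>U. M v * (\<Sum>i\<in>K. (f v i)^2))
      - 2 * (\<Sum>i\<in>K. c i * (\<Sum>v\<in>U. M v * f v i)) + (\<Sum>i\<in>K. (c i)^2) * (\<Sum>v\<in>U. M v)"
    unfolding e sum.distrib sum_subtractf by (simp add: sum_distrib_left sum_distrib_right sum.swap[of _ U K])
  also have "\<dots> = (\<Sum>v\<in>U. M v * (\<Sum>i\<in>K. (f v i)^2))" using assms by simp
  finally show ?thesis .
qed

lemma key:
  fixes M :: "'a \<Rightarrow> int" and f :: "'a \<Rightarrow> nat \<Rightarrow> int"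
  assumes "finite U" "finite K" "u \<in> U" "\<forall>v\<in>U-{u}. M v \<ge> 0" "(\<Sum>v\<in>U. M v) = 0"
    "\<forall>i\<in>K. (\<Sum>v\<in>U. M v * f v i) = 0"
    "\<forall>v\<in>U. v \<noteq> u \<longrightarrow> (\<exists>i\<in>K. f v i \<noteq> f u i)"
  shows "(\<Sum>v\<in>U. M v * (\<Sum>i\<in>K. (f v i)^2)) \<ge> 0"
    "(\<Sum>v\<in>U. M v * (\<Sum>i\<in>K. (f v i)^2)) = 0 \<Longrightarrow> \<forall>v\<in>U. M v = 0"
proof -
  let ?D = "\<lambda>v. M v * (\<Sum>i\<in>K. (f v i - f u i)^2)"
  have E: "(\<Sum>v\<in>U. ?D v) = (\<Sum>v\<in>U. M v * (\<Sum>i\<in>K. (f v i)^2))"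
    using key_expand[OF assms(1,2,5,6)] .
  have nn: "\<forall>v\<in>U. ?D v \<ge> 0"
  proof
    fix v assume v: "v \<in> U"
    show "?D v \<ge> 0"
    proof (cases "v = u")
      case True then show ?thesis by simp
    next
      case False then show ?thesis using v assms(4) by (simp add: sum_nonneg)
    qed
  qed
  then show "(\<Sum>v\<in>U. M v * (\<Sum>i\<in>K. (f v i)^2)) \<ge> 0" proof -
    have "(\<Sum>v\<in>U. ?D v) \<ge> 0" using nn by (intro sum_nonneg) blast
    thus ?thesis using E by linarith
  qed
  assume z: "(\<Sum>v\<in>U. M v * (\<Sum>i\<in>K. (f v i)^2)) = 0"
  have all0: "\<forall>v\<in>U. ?D v = 0" proof -
    have "(\<Sum>v\<in>U. ?D v) = 0" using E z by simp
    thus ?thesis using sum_nonneg_eq_0_iff[OF assms(1), of ?D] nn by blast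
  qed
  have off: "\<forall>v\<in>U-{u}. M v = 0"
  proof
    fix v assume v: "v \<in> U - {u}"
    then obtain i where i: "i \<in> K" "f v i \<noteq> f u i" using assms(7) by auto
    have "(f v i - f u i)^2 > 0" using i(2) by simp
    moreover have "(f v i - f u i)^2 \<le> (\<Sum>i\<in>K. (f v i - f u i)^2)"
      by (rule member_le_sum[OF i(1)]) (simp_all add: assms(2))
    ultimately have "(\<Sum>i\<in>K. (f v i - f u i)^2) \<noteq> 0" by linarith
    moreover have "?D v = 0" using all0 v by blast
    ultimately show "M v = 0" by simp
  qed
  have "(\<Sum>v\<in>U. M v) = M u + (\<Sum>v\<in>U-{u}. M v)"
    using sum.remove[OF assms(1,3)] .
  then have "M u = 0" using off assms(5) by simp
  with off show "\<forall>v\<in>U. M v = 0" by blast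
qed


lemma Umin_finite: "finite (Umin n d I)"
proof -
  let ?B = "d * (Max ((\<lambda>u. u (n+1)) ` Umin n d I)) + 1"
  let ?c = "nat (muI d I + 1)"
  have bnd: "u i \<le> d * ?c + ?c" if "u \<in> Umin n d I" for u i
  proof -
    have u: "\<forall>i. n + 1 < i \<longrightarrow> u i = 0" "(\<Sum>i\<le>n. u i) = d * u (n + 1)"
        "int (u (n + 1)) = muI d I + 1" using that unfolding Umin_def by auto
    have c: "u (n+1) = ?c" using u(3) by simp
    show ?thesis
    proof (cases "i \<le> n")
      case True
      have "u i \<le> (\<Sum>i\<le>n. u i)" by (rule member_le_sum) (use True in auto)
      then show ?thesis using u(2) c by simp
    next
      case False
      then show ?thesis using u(1) c by (cases "i = n+1") auto
    qed
  qed
  let ?g = "\<lambda>f i. if i \<le> n+1 then f i else (0::nat)"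
  have "Umin n d I \<subseteq> ?g ` (PiE {..n+1} (\<lambda>_. {..d * ?c + ?c}))"
  proof
    fix u assume uu: "u \<in> Umin n d I"
    have z: "\<forall>i. n + 1 < i \<longrightarrow> u i = 0" using uu unfolding Umin_def by auto
    have "u = ?g (restrict u {..n+1})" using z by (auto simp: fun_eq_iff)
    moreover have "restrict u {..n+1} \<in> PiE {..n+1} (\<lambda>_. {..d * ?c + ?c})"
      using bnd[OF uu] by auto
    ultimately show "u \<in> ?g ` (PiE {..n+1} (\<lambda>_. {..d * ?c + ?c}))" by blast
  qed
  moreover have "finite (PiE {..n+1} (\<lambda>_. {..d * ?c + ?c}))" by (intro finite_PiE) auto
  ultimately show ?thesis using finite_subset by blast
qed

theorem proposition7p7:
  fixes n d N :: nat and I :: "nat set" and a :: "nat \<Rightarrow> nat \<Rightarrow> nat"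
    and k :: "(nat \<Rightarrow> nat) \<Rightarrow> nat" and l :: "(nat \<Rightarrow> nat) \<Rightarrow> nat \<Rightarrow> int"
  assumes "n \<ge> 1" and "d \<ge> 2" and "I \<subseteq> {0..n}"
    and "\<forall>j\<in>{1..N}. (\<Sum>i\<le>n. a j i) = d"
    and "int N \<ge> muI d I + int (card (Umin n d I))"
    and "\<forall>u\<in>Umin n d I. 1 \<le> k u \<and> k u \<le> card (Umin n d I) \<and>
           (\<forall>i. u i = aplus n a (nat (muI d I + int (k u))) i
                     + (\<Sum>j\<in>{1..nat (muI d I)}. aplus n a j i))"
    and "\<forall>u\<in>Umin n d I. l u \<in> Lset n N a (muI d I) (k u)"
  shows "(\<forall>j. (\<Sum>u\<in>Umin n d I. l u j) = 0) \<longleftrightarrow> (\<forall>u\<in>Umin n d I. l u = (\<lambda>j. 0))"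
proof
  assume "\<forall>u\<in>Umin n d I. l u = (\<lambda>j. 0)"
  then show "\<forall>j. (\<Sum>u\<in>Umin n d I. l u j) = 0" by simp
next
  assume S: "\<forall>j. (\<Sum>u\<in>Umin n d I. l u j) = 0"
  define U where "U = Umin n d I"
  define mu where "mu = muI d I"
  define m where "m = nat mu"
  define p where "p = (\<lambda>v. m + k v)"
  define C where "C = (\<lambda>i. \<Sum>j\<in>{1..m}. aplus n a j i)"
  have fin: "finite U" unfolding U_def by (rule Umin_finite)
  have kU: "1 \<le> k u \<and> k u \<le> card U \<and> (\<forall>i. u i = aplus n a (nat (mu + int (k u))) i + C i)"
    if "u \<in> U" for u
    using assms(6) that unfolding U_def mu_def C_def m_def by blast
  have mu0: "mu \<ge> 0"
  proof (rule ccontr)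
    assume "\<not> mu \<ge> 0"
    have "card I = 0"
    proof (rule ccontr)
      assume "card I \<noteq> 0"
      then have "real (card I) / real d > 0" using assms(2) by simp
      then have "\<lceil>real (card I) / real d\<rceil> \<ge> 1" by (simp add: le_ceiling_iff)
      then show False using \<open>\<not> mu \<ge> 0\<close> unfolding mu_def muI_def by simp
    qed
    then have "I = {}" using assms(3) finite_subset by fastforce
    have "muI d I = -1" using \<open>card I = 0\<close> unfolding muI_def by simp
    then have "(\<lambda>_. 0) \<in> U" unfolding U_def Umin_def using \<open>I = {}\<close> by simp
    from kU[OF this] have "(0::nat) = aplus n a (nat (mu + int (k (\<lambda>_. 0)))) (n+1) + C (n+1)" by blast
    then show False unfolding aplus_def by simp
  qed
  have mdef: "int m = mu" using mu0 unfolding m_def by simp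
  have pk: "nat (mu + int (k u)) = p u" for u unfolding p_def using mdef by simp
  have vrep: "u i = aplus n a (p u) i + C i" if "u \<in> U" for u i
    using kU[OF that] pk[of u] by metis
  have injk: "inj_on k U"
  proof (rule inj_onI)
    fix u v assume "u \<in> U" "v \<in> U" "k u = k v"
    then show "u = v" using vrep[of u] vrep[of v] unfolding p_def by (simp add: fun_eq_iff)
  qed
  have injp: "inj_on p U" using injk unfolding p_def inj_on_def by simp
  have pN: "p v \<in> {1..N}" "p v > m" if "v \<in> U" for v
    using kU[OF that] assms(5) mdef unfolding p_def U_def mu_def by auto
  have L: "(\<forall>j. j \<notin> {1..N} \<longrightarrow> l u j = 0)
      \<and> (\<forall>i\<le>n + 1. (\<Sum>j=1..N. l u j * int (aplus n a j i)) = 0)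
      \<and> (\<forall>j\<in>{1..N}. if int j \<le> mu \<or> int j = mu + int (k u) then l u j \<le> 0 else 0 \<le> l u j)"
    if "u \<in> U" for u
    using assms(7) that unfolding U_def mu_def Lset_def by blast
  have L1: "l u j = 0" if "u \<in> U" "j \<notin> {1..N}" for u j using L[OF that(1)] that(2) by blast
  have L2: "(\<Sum>j=1..N. l u j * int (aplus n a j i)) = 0" if "u \<in> U" "i \<le> n+1" for u i
    using L[OF that(1)] that(2) by blast
  have L3: "if int j \<le> mu \<or> int j = mu + int (k u) then l u j \<le> 0 else 0 \<le> l u j"
    if "u \<in> U" "j \<in> {1..N}" for u j using L[OF that(1)] that(2) by blast
  have SU: "\<forall>j. (\<Sum>u\<in>U. l u j) = 0" using S unfolding U_def by simp
  have off: "l u j = 0" if u: "u \<in> U" and j: "j \<notin> p ` U" for u j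
  proof (cases "j \<in> {1..N}")
    case False then show ?thesis using L1[OF u] by blast
  next
    case jN: True
    show ?thesis
    proof (cases "j \<le> m")
      case True
      have np: "\<forall>w\<in>U. - l w j \<ge> 0"
      proof
        fix w assume w: "w \<in> U"
        have "int j \<le> mu" using True mdef by simp
        then show "- l w j \<ge> 0" using L3[OF w jN] by simp
      qed
      have "(\<Sum>w\<in>U. - l w j) = 0" using SU by (simp add: sum_negf)
      then have "\<forall>w\<in>U. - l w j = 0" using sum_nonneg_eq_0_iff[OF fin, of "\<lambda>w. - l w j"] np by blast
      then show ?thesis using u by simp
    next
      case False
      have nn: "\<forall>w\<in>U. l w j \<ge> 0"
      proof
        fix w assume w: "w \<in> U"
        have "j \<noteq> p w" using j w by blast
        hence "\<not> (int j \<le> mu \<or> int j = mu + int (k w))" using False mdef unfolding p_def by auto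
        thus "l w j \<ge> 0" using L3[OF w jN] by simp
      qed
      then have "\<forall>w\<in>U. l w j = 0" using sum_nonneg_eq_0_iff[OF fin, of "\<lambda>w. l w j"] SU by blast
      then show ?thesis using u by simp
    qed
  qed
  have sgn: "l u (p v) \<ge> 0" if u: "u \<in> U" and v: "v \<in> U" and vu: "v \<noteq> u" for u v
  proof -
    have "p v \<noteq> p u" using injp u v vu unfolding inj_on_def by blast
    then have "\<not> (int (p v) \<le> mu \<or> int (p v) = mu + int (k u))"
      using pN(2)[OF v] mdef unfolding p_def by auto
    then show ?thesis using L3[OF u pN(1)[OF v]] by simp
  qed
  have rep: "l u j = (\<Sum>v\<in>U. if j = p v then l u (p v) else 0)" if u: "u \<in> U" for u j
  proof (cases "j \<in> p ` U")
    case True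
    then obtain w where w: "w \<in> U" "j = p w" by blast
    have "(\<Sum>v\<in>U. if j = p v then l u (p v) else 0) = (\<Sum>v\<in>U. if v = w then l u (p w) else 0)"
    proof (rule sum.cong)
      fix v assume v: "v \<in> U"
      have "(j = p v) = (v = w)" using injp v w unfolding inj_on_def by blast
      then show "(if j = p v then l u (p v) else 0) = (if v = w then l u (p w) else 0)" by auto
    qed simp
    also have "\<dots> = l u (p w)" using w(1) fin by simp
    finally show ?thesis using w by simp
  next
    case False
    then have "\<forall>v\<in>U. j \<noteq> p v" by blast
    then have "(\<Sum>v\<in>U. if j = p v then l u (p v) else 0) = 0" by (auto intro!: sum.neutral)
    then show ?thesis using off[OF u False] by simp
  qed
  have row: "(\<Sum>v\<in>U. l u (p v) * int (aplus n a (p v) i)) = 0" if u: "u \<in> U" and i: "i \<le> n+1" for u i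
  proof -
    have "(\<Sum>j=1..N. l u j * int (aplus n a j i))
        = (\<Sum>j=1..N. \<Sum>v\<in>U. if j = p v then l u (p v) * int (aplus n a (p v) i) else 0)"
    proof (rule sum.cong)
      fix j
      show "l u j * int (aplus n a j i) = (\<Sum>v\<in>U. if j = p v then l u (p v) * int (aplus n a (p v) i) else 0)"
        by (subst rep[OF u, of j]) (auto simp: sum_distrib_right intro!: sum.cong)
    qed simp
    also have "\<dots> = (\<Sum>v\<in>U. \<Sum>j=1..N. if j = p v then l u (p v) * int (aplus n a (p v) i) else 0)"
      by (rule sum.swap)
    also have "\<dots> = (\<Sum>v\<in>U. l u (p v) * int (aplus n a (p v) i))"
    proof (rule sum.cong)
      fix v assume v: "v \<in> U"
      show "(\<Sum>j=1..N. if j = p v then l u (p v) * int (aplus n a (p v) i) else 0) = l u (p v) * int (aplus n a (p v) i)"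
        using pN(1)[OF v] by (simp add: sum.delta)
    qed simp
    finally show ?thesis using L2[OF u i] by simp
  qed
  have rowsum: "(\<Sum>v\<in>U. l u (p v)) = 0" if "u \<in> U" for u
    using row[OF that, of "n+1"] unfolding aplus_def by simp
  have vrow: "\<forall>i\<in>{..n+1}. (\<Sum>v\<in>U. l u (p v) * int (v i)) = 0" if u: "u \<in> U" for u
  proof
    fix i assume i: "i \<in> {..n+1}"
    have "(\<Sum>v\<in>U. l u (p v) * int (v i)) = (\<Sum>v\<in>U. l u (p v) * int (aplus n a (p v) i) + l u (p v) * int (C i))"
    proof (rule sum.cong)
      fix v assume v: "v \<in> U"
      show "l u (p v) * int (v i) = l u (p v) * int (aplus n a (p v) i) + l u (p v) * int (C i)"
        by (subst vrep[OF v, of i]) (simp add: ring_distribs)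
    qed simp
    also have "\<dots> = (\<Sum>v\<in>U. l u (p v) * int (aplus n a (p v) i)) + (\<Sum>v\<in>U. l u (p v)) * int (C i)"
      by (simp add: sum.distrib sum_distrib_right)
    also have "\<dots> = 0" using row[OF u] i rowsum[OF u] by simp
    finally show "(\<Sum>v\<in>U. l u (p v) * int (v i)) = 0" .
  qed
  have dist: "\<forall>v\<in>U. v \<noteq> u \<longrightarrow> (\<exists>i\<in>{..n+1}. int (v i) \<noteq> int (u i))" if u: "u \<in> U" for u
  proof (intro ballI impI)
    fix v assume v: "v \<in> U" and vu: "v \<noteq> u"
    then obtain i where i: "v i \<noteq> u i" by (auto simp: fun_eq_iff)
    have z: "\<forall>i. n + 1 < i \<longrightarrow> w i = 0" if "w \<in> U" for w using that unfolding U_def Umin_def by blast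
    have "i \<le> n+1" using z[OF u] z[OF v] i by (metis not_le)
    then show "\<exists>i\<in>{..n+1}. int (v i) \<noteq> int (u i)" using i by auto
  qed
  let ?Q = "\<lambda>v. \<Sum>i\<in>{..n+1}. (int (v i))^2"
  let ?T = "\<lambda>u. \<Sum>v\<in>U. l u (p v) * ?Q v"
  have Tnn: "\<forall>u\<in>U. ?T u \<ge> 0"
  proof
    fix u assume u: "u \<in> U"
    show "?T u \<ge> 0"
      using key(1)[of U "{..n+1}" u "\<lambda>v. l u (p v)" "\<lambda>v i. int (v i)"] fin u sgn[OF u] rowsum[OF u] vrow[OF u] dist[OF u]
      by simp
  qed
  have Tsum: "(\<Sum>u\<in>U. ?T u) = 0"
  proof -
    have "(\<Sum>u\<in>U. ?T u) = (\<Sum>v\<in>U. \<Sum>u\<in>U. l u (p v) * ?Q v)" by (rule sum.swap)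
    also have "\<dots> = (\<Sum>v\<in>U. (\<Sum>u\<in>U. l u (p v)) * ?Q v)" by (simp add: sum_distrib_right)
    also have "\<dots> = 0" using SU by simp
    finally show ?thesis .
  qed
  have T0: "\<forall>u\<in>U. ?T u = 0" using sum_nonneg_eq_0_iff[OF fin, of ?T] Tnn Tsum by blast
  have M0: "\<forall>v\<in>U. l u (p v) = 0" if u: "u \<in> U" for u
    using key(2)[of U "{..n+1}" u "\<lambda>v. l u (p v)" "\<lambda>v i. int (v i)"] fin u sgn[OF u] rowsum[OF u] vrow[OF u] dist[OF u]
      T0 by simp
  show "\<forall>u\<in>Umin n d I. l u = (\<lambda>j. 0)"
  proof (intro ballI ext)
    fix u j assume "u \<in> Umin n d I"
    then have u: "u \<in> U" unfolding U_def .
    show "l u j = 0" using rep[OF u, of j] M0[OF u] by (auto intro!: sum.neutral)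
  qed
qed

end
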